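(* Let $k\in\mathbb{N}$ and let $v=(v_0,\ldots,v_{2k})\in\mathbb{R}^{2k+1}$ be a singular sequence. Then the following statements are equivalent: (1) $v$ is positively recursively generated and $\varphi_0\neq 0$; (2) $v$ is negatively recursively generated and $\psi_{r'-1}\neq 0$, where $r'=\operatorname{rank} v^{(\mathrm{rev})}$; (3) $v$ is recursively generated; (4) $v$ is recursively generated, $\operatorname{rank} v=\operatorname{rank} v^{(\mathrm{rev})}=:r$, $\varphi_0\neq 0$ and $$(\psi_0,\psi_1,\ldots,\psi_{r-2},\psi_{r-1})=\left(-\frac{\varphi_1}{\varphi_0},-\frac{\varphi_2}{\varphi_0},\ldots,-\frac{\varphi_{r-1}}{\varphi_0},\frac{1}{\varphi_0}\right).$$
   Context: For $v=(v_0,\ldots,v_{2k})\in\mathbb{R}^{2k+1}$, $A_v=(v_{i+j})_{i,j=0}^k$ is the associated Hankel matrix, with columns $\mathbf{v_0},\ldots,\mathbf{v_k}$ ($\mathbf{v_j}=(v_{j+\ell})_{\ell=0}^k$). For $0\le m\le k$, $A_v(m)=(v_{i+j})_{i,j=0}^m$ is the upper left $(m+1)\times(m+1)$ corner and $A_v[m]=(v_{i+j})_{i,j=k-m}^k$ the lower right $(m+1)\times(m+1)$ corner. The rank of $v$ is $\operatorname{rank} v=k+1$ if $A_v$ is nonsingular, and otherwise $\operatorname{rank} v=\min\{i:\mathbf{v_i}\in\operatorname{span}\{\mathbf{v_0},\ldots,\mathbf{v_{i-1}}\}\}$; $v$ is singular if $\operatorname{rank} v<k+1$. The reversed sequence is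 $v^{(\mathrm{rev})}=(v_{2k},\ldots,v_0)$. $v$ is positively recursively generated (prg) if, with $r=\operatorname{rank} v$: $A_v(r-1)\succ 0$, and if $r<k+1$, then setting $(\varphi_0,\ldots,\varphi_{r-1})^T:=A_v(r-1)^{-1}(v_r,\ldots,v_{2r-1})^T$, one has $v_j=\varphi_0v_{j-r}+\cdots+\varphi_{r-1}v_{j-1}$ for $j=r,\ldots,2k$. $v$ is negatively recursively generated (nrg) if, with $r=\operatorname{rank} v^{(\mathrm{rev})}$: $A_v[r-1]\succ 0$, and if $r<k+1$, then setting $(\psi_0,\ldots,\psi_{r-1})^T:=A_v[r-1]^{-1}(v_{2k-2r+1},\ldots,v_{2k-r})^T$, one has $v_{2k-r-j}=\psi_0v_{2k-r+1-j}+\cdots+\psi_{r-1}v_{2k-j}$ for $j=0,\ldots,2k-r$. $v$ is recursively generated (rg) if it is both prg and nrg. *)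

theory Defs
  imports "Jordan_Normal_Form.Gauss_Jordan_Elimination" "Jordan_Normal_Form.Determinant"
begin

(* A sequence v = (v_0,...,v_{2k}) in R^{2k+1} is represented as v :: nat => real;
   only the entries v 0, ..., v (2*k) are ever used. *)

definition hankel :: "nat \<Rightarrow> (nat \<Rightarrow> real) \<Rightarrow> real mat" where
  "hankel k v = mat (k+1) (k+1) (\<lambda>(i,j). v (i+j))"

(* upper left corner A_v(m) for m = r-1, i.e. the r x r matrix (v_{i+j})_{i,j=0}^{r-1} *)
definition hankel_ul :: "nat \<Rightarrow> (nat \<Rightarrow> real) \<Rightarrow> real mat" where
  "hankel_ul r v = mat r r (\<lambda>(i,j). v (i+j))"

(* lower right corner A_v[m] for m = r-1, i.e. the r x r matrix (v_{i+j})_{i,j=k-r+1}^{k} *)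
definition hankel_lr :: "nat \<Rightarrow> nat \<Rightarrow> (nat \<Rightarrow> real) \<Rightarrow> real mat" where
  "hankel_lr k r v = mat r r (\<lambda>(i,j). v ((k+1-r) + i + (k+1-r) + j))"

definition col_in_span :: "nat \<Rightarrow> (nat \<Rightarrow> real) \<Rightarrow> nat \<Rightarrow> bool" where
  "col_in_span k v i = (\<exists>c :: nat \<Rightarrow> real. \<forall>l\<le>k. v (i+l) = (\<Sum>j<i. c j * v (j+l)))"

definition hrank :: "nat \<Rightarrow> (nat \<Rightarrow> real) \<Rightarrow> nat" where
  "hrank k v = (if det (hankel k v) \<noteq> 0 then k+1 else (LEAST i. col_in_span k v i))"

definition singular_seq :: "nat \<Rightarrow> (nat \<Rightarrow> real) \<Rightarrow> bool" where
  "singular_seq k v = (hrank k v < k+1)"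

definition rev_seq :: "nat \<Rightarrow> (nat \<Rightarrow> real) \<Rightarrow> (nat \<Rightarrow> real)" where
  "rev_seq k v = (\<lambda>i. v (2*k - i))"

definition pos_def :: "nat \<Rightarrow> real mat \<Rightarrow> bool" where
  "pos_def n A = (A \<in> carrier_mat n n \<and>
     (\<forall>x \<in> carrier_vec n. x \<noteq> 0\<^sub>v n \<longrightarrow> x \<bullet> (A *\<^sub>v x) > 0))"

(* (phi_0,...,phi_{r-1}) = A_v(r-1)^{-1} (v_r,...,v_{2r-1}), r = rank v; phi_j = 0 for j >= r *)
definition phi :: "nat \<Rightarrow> (nat \<Rightarrow> real) \<Rightarrow> nat \<Rightarrow> real" where
  "phi k v j = (let r = hrank k v; B = the (mat_inverse (hankel_ul r v)) in
     if j < r then (\<Sum>l<r. B $$ (j,l) * v (r + l)) else 0)"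

(* (psi_0,...,psi_{r-1}) = A_v[r-1]^{-1} (v_{2k-2r+1},...,v_{2k-r}), r = rank v^(rev);
   psi_j = 0 for j >= r *)
definition psi :: "nat \<Rightarrow> (nat \<Rightarrow> real) \<Rightarrow> nat \<Rightarrow> real" where
  "psi k v j = (let r = hrank k (rev_seq k v); B = the (mat_inverse (hankel_lr k r v)) in
     if j < r then (\<Sum>l<r. B $$ (j,l) * v (2*k + 1 - 2*r + l)) else 0)"

definition prg :: "nat \<Rightarrow> (nat \<Rightarrow> real) \<Rightarrow> bool" where
  "prg k v = (let r = hrank k v in
     pos_def r (hankel_ul r v) \<and>
     (r < k+1 \<longrightarrow> (\<forall>j. r \<le> j \<and> j \<le> 2*k \<longrightarrow>
        v j = (\<Sum>i<r. phi k v i * v (j - r + i)))))"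

definition nrg :: "nat \<Rightarrow> (nat \<Rightarrow> real) \<Rightarrow> bool" where
  "nrg k v = (let r = hrank k (rev_seq k v) in
     pos_def r (hankel_lr k r v) \<and>
     (r < k+1 \<longrightarrow> (\<forall>j. j \<le> 2*k - r \<longrightarrow>
        v (2*k - r - j) = (\<Sum>i<r. psi k v i * v (2*k - r + 1 - j + i)))))"

definition rg :: "nat \<Rightarrow> (nat \<Rightarrow> real) \<Rightarrow> bool" where
  "rg k v = (prg k v \<and> nrg k v)"

end

theory Submission
  imports Defs
begin

definition PDs :: "(nat \<Rightarrow> real) \<Rightarrow> nat \<Rightarrow> nat \<Rightarrow> bool" where
  "PDs v s n = (\<forall>x. (\<exists>i<n. x i \<noteq> 0) \<longrightarrow> 0 < (\<Sum>a<n. \<Sum>b<n. x a * v (s+a+s+b) * x b))"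

lemma quad_mat:
  assumes "x \<in> carrier_vec n"
  shows "x \<bullet> (mat n n (\<lambda>(i,j). f i j) *\<^sub>v x) = (\<Sum>a<n. \<Sum>b<n. x$a * f a b * x$b)"
  using assms by (auto simp: scalar_prod_def mult_mat_vec_def sum_distrib_left atLeast0LessThan mult.assoc
     mult.commute mult.left_commute intro!: sum.cong)

lemma vec_nonzero:
  assumes "x \<in> carrier_vec n" "x \<noteq> 0\<^sub>v n" shows "\<exists>i<n. x$i \<noteq> 0"
proof (rule ccontr)
  assume "\<not> ?thesis"
  hence "x = 0\<^sub>v n" using assms(1) by (intro eq_vecI) auto
  thus False using assms(2) by simp
qed

lemma pos_def_iff:
  "pos_def n (mat n n (\<lambda>(i,j). f i j)) \<longleftrightarrow> (\<forall>x. (\<exists>i<n. x i \<noteq> 0) \<longrightarrow> 0 < (\<Sum>a<n. \<Sum>b<n. x a * f a b * x b))"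
proof
  assume H: "pos_def n (mat n n (\<lambda>(i,j). f i j))"
  show "\<forall>x. (\<exists>i<n. x i \<noteq> 0) \<longrightarrow> 0 < (\<Sum>a<n. \<Sum>b<n. x a * f a b * x b)"
  proof (intro allI impI)
    fix x :: "nat \<Rightarrow> real" assume "\<exists>i<n. x i \<noteq> 0"
    then obtain i where i: "i<n" "x i \<noteq> 0" by auto
    have "vec n x \<noteq> 0\<^sub>v n" using i by (metis index_vec index_zero_vec(1))
    hence "0 < vec n x \<bullet> (mat n n (\<lambda>(i,j). f i j) *\<^sub>v vec n x)" using H unfolding pos_def_def by auto
    also have "\<dots> = (\<Sum>a<n. \<Sum>b<n. x a * f a b * x b)" by (subst quad_mat) auto
    finally show "0 < (\<Sum>a<n. \<Sum>b<n. x a * f a b * x b)" .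
  qed
next
  assume H: "\<forall>x. (\<exists>i<n. x i \<noteq> 0) \<longrightarrow> 0 < (\<Sum>a<n. \<Sum>b<n. x a * f a b * x b)"
  show "pos_def n (mat n n (\<lambda>(i,j). f i j))"
    unfolding pos_def_def
  proof (intro conjI ballI impI)
    show "mat n n (\<lambda>(i,j). f i j) \<in> carrier_mat n n" by auto
    fix x :: "real vec" assume x: "x \<in> carrier_vec n" "x \<noteq> 0\<^sub>v n"
    have "0 < (\<Sum>a<n. \<Sum>b<n. x$a * f a b * x$b)" using H[rule_format, of "\<lambda>i. x$i"] vec_nonzero[OF x] by auto
    thus "0 < x \<bullet> (mat n n (\<lambda>(i,j). f i j) *\<^sub>v x)" using quad_mat[OF x(1)] by simp
  qed
qed

lemma pd_ul: "pos_def r (hankel_ul r v) \<longleftrightarrow> PDs v 0 r"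
  unfolding hankel_ul_def PDs_def pos_def_iff by simp

lemma pd_lr: "pos_def r (hankel_lr k r v) \<longleftrightarrow> PDs v (k+1-r) r"
  unfolding hankel_lr_def PDs_def pos_def_iff by simp

lemma det_mat_zero_iff:
  "det (mat n n (\<lambda>(i,j). f i j) :: real mat) = 0 \<longleftrightarrow> (\<exists>x. (\<exists>i<n. x i \<noteq> 0) \<and> (\<forall>a<n. (\<Sum>b<n. f a b * x b) = 0))"
proof -
  have c: "mat n n (\<lambda>(i,j). f i j) \<in> carrier_mat n n" by auto
  have e: "\<And>x. x \<in> carrier_vec n \<Longrightarrow> (mat n n (\<lambda>(i,j). f i j) *\<^sub>v x = 0\<^sub>v n) \<longleftrightarrow> (\<forall>a<n. (\<Sum>b<n. f a b * x$b) = 0)"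
  proof
    fix x :: "real vec" assume x: "x \<in> carrier_vec n"
    { assume H: "mat n n (\<lambda>(i,j). f i j) *\<^sub>v x = 0\<^sub>v n"
      show "\<forall>a<n. (\<Sum>b<n. f a b * x$b) = 0"
      proof (intro allI impI)
        fix a assume a: "a < n"
        have "(mat n n (\<lambda>(i,j). f i j) *\<^sub>v x) $ a = 0" using H a by simp
        moreover have "(mat n n (\<lambda>(i,j). f i j) *\<^sub>v x) $ a = (\<Sum>b<n. f a b * x$b)"
          using a x by (auto simp: mult_mat_vec_def scalar_prod_def atLeast0LessThan intro!: sum.cong)
        ultimately show "(\<Sum>b<n. f a b * x$b) = 0" by simp
      qed }
    { assume "\<forall>a<n. (\<Sum>b<n. f a b * x$b) = 0"
      then show "mat n n (\<lambda>(i,j). f i j) *\<^sub>v x = 0\<^sub>v n"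
        using x by (intro eq_vecI) (auto simp: mult_mat_vec_def scalar_prod_def atLeast0LessThan) }
  qed
  show ?thesis
  proof
    assume "det (mat n n (\<lambda>(i,j). f i j)) = 0"
    then obtain x where x: "x \<in> carrier_vec n" "x \<noteq> 0\<^sub>v n" "mat n n (\<lambda>(i,j). f i j) *\<^sub>v x = 0\<^sub>v n"
      using det_0_iff_vec_prod_zero_field[OF c] by auto
    show "\<exists>x. (\<exists>i<n. x i \<noteq> 0) \<and> (\<forall>a<n. (\<Sum>b<n. f a b * x b) = 0)"
      using vec_nonzero[OF x(1,2)] e[OF x(1)] x(3) by (intro exI[of _ "\<lambda>i. x$i"]) auto
  next
    assume "\<exists>x. (\<exists>i<n. x i \<noteq> 0) \<and> (\<forall>a<n. (\<Sum>b<n. f a b * x b) = 0)"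
    then obtain x where x: "\<exists>i<n. x i \<noteq> 0" "\<forall>a<n. (\<Sum>b<n. f a b * x b) = 0" by blast
    have "vec n x \<noteq> 0\<^sub>v n" using x(1) by (metis index_vec index_zero_vec(1))
    moreover have "mat n n (\<lambda>(i,j). f i j) *\<^sub>v vec n x = 0\<^sub>v n" using e[of "vec n x"] x(2) by auto
    ultimately show "det (mat n n (\<lambda>(i,j). f i j)) = 0"
      using det_0_iff_vec_prod_zero_field[OF c] by (meson vec_carrier)
  qed
qed

lemma pd_solve:
  fixes f :: "nat \<Rightarrow> nat \<Rightarrow> real"
  assumes pd: "\<forall>x. (\<exists>i<n. x i \<noteq> 0) \<longrightarrow> 0 < (\<Sum>a<n. \<Sum>b<n. x a * f a b * x b)"
  shows "\<forall>a<n. (\<Sum>j<n. f a j * (\<Sum>l<n. the (mat_inverse (mat n n (\<lambda>(i,j). f i j))) $$ (j,l) * g l)) = g a"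
proof -
  define A where "A = mat n n (\<lambda>(i,j). f i j)"
  have c: "A \<in> carrier_mat n n" unfolding A_def by auto
  have "det A \<noteq> 0"
  proof
    assume "det A = 0"
    then obtain x where x: "\<exists>i<n. x i \<noteq> 0" "\<forall>a<n. (\<Sum>b<n. f a b * x b) = 0"
      unfolding A_def det_mat_zero_iff by blast
    have "(\<Sum>a<n. \<Sum>b<n. x a * f a b * x b) = (\<Sum>a<n. x a * (\<Sum>b<n. f a b * x b))"
      by (simp add: sum_distrib_left mult.assoc)
    also have "\<dots> = 0" using x(2) by simp
    finally show False using pd x(1) by auto
  qed
  hence "mat_inverse A \<noteq> None" using mat_inverse(1)[OF c] det_non_zero_imp_unit[OF c] by metis
  then obtain B where B: "mat_inverse A = Some B" by blast
  from mat_inverse(2)[OF c B] have AB: "A * B = 1\<^sub>m n" and Bc: "B \<in> carrier_mat n n" by auto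
  have "A *\<^sub>v (B *\<^sub>v vec n g) = vec n g"
    using AB Bc c by (metis assoc_mult_mat_vec one_mult_mat_vec vec_carrier)
  show ?thesis
  proof (intro allI impI)
    fix a assume a: "a < n"
    have "(A *\<^sub>v (B *\<^sub>v vec n g)) $ a = g a" using \<open>A *\<^sub>v (B *\<^sub>v vec n g) = vec n g\<close> a by simp
    moreover have "(A *\<^sub>v (B *\<^sub>v vec n g)) $ a = (\<Sum>j<n. f a j * (\<Sum>l<n. B $$ (j,l) * g l))"
      using a Bc unfolding A_def by (auto simp: mult_mat_vec_def scalar_prod_def atLeast0LessThan intro!: sum.cong)
    ultimately show "(\<Sum>j<n. f a j * (\<Sum>l<n. the (mat_inverse (mat n n (\<lambda>(i,j). f i j))) $$ (j,l) * g l)) = g a"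
      using B unfolding A_def by simp
  qed
qed


definition Qf :: "(nat \<Rightarrow> real) \<Rightarrow> nat \<Rightarrow> nat \<Rightarrow> (nat \<Rightarrow> real) \<Rightarrow> real" where
  "Qf v s n x = (\<Sum>a<n. \<Sum>b<n. x a * v (s+a+s+b) * x b)"

lemma PDs_Qf: "PDs v s n = (\<forall>x. (\<exists>i<n. x i \<noteq> 0) \<longrightarrow> 0 < Qf v s n x)"
  unfolding PDs_def Qf_def by simp

lemma kernel_contra:
  assumes "PDs v s n" "\<exists>b<n. x b \<noteq> 0" "\<forall>a<n. (\<Sum>b<n. v (s+a+s+b) * x b) = 0"
  shows False
proof -
  have "Qf v s n x = (\<Sum>a<n. x a * (\<Sum>b<n. v (s+a+s+b) * x b))"
    unfolding Qf_def by (simp add: sum_distrib_left mult.assoc)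
  also have "\<dots> = 0" using assms(3) by simp
  finally show False using assms(1,2) unfolding PDs_Qf by auto
qed

lemma sum_embed:
  fixes d m n :: nat
  assumes "d + m \<le> n"
  shows "(\<Sum>b<n. if d \<le> b \<and> b < d+m then g b else 0) = (\<Sum>b<m. g (b+d))"
proof -
  have "(\<Sum>b<n. if d \<le> b \<and> b < d+m then g b else 0) = (\<Sum>b\<in>{d..<d+m}. g b)"
    using assms by (intro sum.mono_neutral_cong_right) auto
  also have "\<dots> = (\<Sum>b<m. g (b+d))"
    using sum.shift_bounds_nat_ivl[of g 0 d m] by (simp add: atLeast0LessThan add.commute)
  finally show ?thesis .
qed

lemma sub_block:
  assumes pd: "PDs v s n" and dm: "d + m \<le> n"
  shows "PDs v (s+d) m"
  unfolding PDs_Qf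
proof (intro allI impI)
  fix x :: "nat \<Rightarrow> real" assume nz: "\<exists>i<m. x i \<noteq> 0"
  define x' where "x' b = (if d \<le> b \<and> b < d+m then x (b-d) else 0)" for b
  have nz': "\<exists>i<n. x' i \<noteq> 0"
  proof -
    obtain i where "i<m" "x i \<noteq> 0" using nz by auto
    thus ?thesis using dm by (intro exI[of _ "i+d"]) (auto simp: x'_def)
  qed
  have inner: "(\<Sum>b<n. x' a * v (s+a+s+b) * x' b) = (\<Sum>b<m. x' a * v (s+a+s+(b+d)) * x b)" for a
  proof -
    have "(\<Sum>b<n. x' a * v (s+a+s+b) * x' b) = (\<Sum>b<n. if d \<le> b \<and> b < d+m then x' a * v (s+a+s+b) * x (b-d) else 0)"
      by (rule sum.cong) (auto simp: x'_def)
    also have "\<dots> = (\<Sum>b<m. x' a * v (s+a+s+(b+d)) * x b)"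
      by (subst sum_embed[OF dm]) simp
    finally show ?thesis .
  qed
  have "Qf v s n x' = (\<Sum>a<n. \<Sum>b<m. x' a * v (s+a+s+(b+d)) * x b)"
    unfolding Qf_def using inner by simp
  also have "\<dots> = (\<Sum>a<n. if d \<le> a \<and> a < d+m then (\<Sum>b<m. x (a-d) * v (s+a+s+(b+d)) * x b) else 0)"
    by (rule sum.cong) (auto simp: x'_def)
  also have "\<dots> = (\<Sum>a<m. \<Sum>b<m. x a * v (s+(a+d)+s+(b+d)) * x b)"
    by (subst sum_embed[OF dm]) simp
  also have "\<dots> = Qf v (s+d) m x"
    unfolding Qf_def by (intro sum.cong refl) (simp add: ac_simps)
  finally have "Qf v (s+d) m x = Qf v s n x'" by simp
  thus "0 < Qf v (s+d) m x" using pd nz' unfolding PDs_Qf by auto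
qed

definition frec :: "(nat \<Rightarrow> real) \<Rightarrow> nat \<Rightarrow> (nat \<Rightarrow> real) \<Rightarrow> nat \<Rightarrow> bool" where
  "frec v r f k = (\<forall>j. r \<le> j \<and> j \<le> 2*k \<longrightarrow> v j = (\<Sum>i<r. f i * v (j-r+i)))"

definition brec :: "(nat \<Rightarrow> real) \<Rightarrow> nat \<Rightarrow> (nat \<Rightarrow> real) \<Rightarrow> nat \<Rightarrow> bool" where
  "brec v r g k = (\<forall>m. m \<le> 2*k - r \<longrightarrow> v m = (\<Sum>i<r. g i * v (m+1+i)))"

definition Cs :: "(nat \<Rightarrow> real) \<Rightarrow> nat \<Rightarrow> (nat \<Rightarrow> real) \<Rightarrow> nat \<Rightarrow> real" where
  "Cs f r x j = (if j = 0 then 0 else x (j-1)) + x (r-1) * f j"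

lemma half_step:
  assumes fr: "frec v r f k" and r: "1 \<le> r" and p: "p + r \<le> 2*k"
  shows "(\<Sum>j<r. x j * v (p+1+j)) = (\<Sum>j<r. Cs f r x j * v (p+j))"
proof -
  obtain r0 where r0: "r = Suc r0" using r by (cases r) auto
  have vr: "v (p+r) = (\<Sum>i<r. f i * v (p+i))"
    using fr p unfolding frec_def by (auto dest: spec[of _ "p+r"])
  have "(\<Sum>j<r. x j * v (p+1+j)) = (\<Sum>j<r0. x j * v (p+1+j)) + x r0 * v (p+r)"
    using r0 by simp
  also have "\<dots> = (\<Sum>j<r0. x j * v (p+1+j)) + x r0 * (\<Sum>i<r. f i * v (p+i))"
    using vr by simp
  also have "\<dots> = (\<Sum>j<r. (if j = 0 then 0 else x (j-1)) * v (p+j)) + (\<Sum>j<r. x (r-1) * f j * v (p+j))"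
    using r0 by (simp add: sum.lessThan_Suc_shift sum_distrib_left distrib_left mult.assoc del: sum.lessThan_Suc)
  also have "\<dots> = (\<Sum>j<r. Cs f r x j * v (p+j))"
    unfolding Cs_def by (simp add: sum.distrib[symmetric] algebra_simps)
  finally show ?thesis .
qed


lemma dsum_swap:
  fixes x y :: "nat \<Rightarrow> real"
  shows "(\<Sum>a<r. x a * (\<Sum>b<r. y b * w a b)) = (\<Sum>b<r. y b * (\<Sum>a<r. x a * w a b))"
  unfolding sum_distrib_left by (subst sum.swap) (simp add: mult.left_commute)

lemma quad_step:
  assumes fr: "frec v r f k" and r: "1 \<le> r" and s: "s + r \<le> k"
  shows "Qf v (s+1) r x = Qf v s r (Cs f r x)"
proof -
  let ?C = "Cs f r x"
  have "Qf v (s+1) r x = (\<Sum>a<r. x a * (\<Sum>b<r. x b * v ((s+1+a+s)+1+b)))"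
    unfolding Qf_def by (intro sum.cong refl) (simp add: sum_distrib_left ac_simps)
  also have "\<dots> = (\<Sum>a<r. x a * (\<Sum>b<r. ?C b * v ((s+1+a+s)+b)))"
  proof (intro sum.cong refl)
    fix a assume "a \<in> {..<r}"
    hence "(s+1+a+s) + r \<le> 2*k" using s by auto
    thus "x a * (\<Sum>b<r. x b * v ((s+1+a+s)+1+b)) = x a * (\<Sum>b<r. ?C b * v ((s+1+a+s)+b))"
      using half_step[OF fr r, of "s+1+a+s" x] by simp
  qed
  also have "\<dots> = (\<Sum>b<r. ?C b * (\<Sum>a<r. x a * v ((s+1+a+s)+b)))"
    by (rule dsum_swap)
  also have "\<dots> = (\<Sum>b<r. ?C b * (\<Sum>a<r. x a * v ((s+b+s)+1+a)))"
    by (intro sum.cong refl arg_cong2[where f="(*)"] arg_cong[where f=v]) simp_all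
  also have "\<dots> = (\<Sum>b<r. ?C b * (\<Sum>a<r. ?C a * v ((s+b+s)+a)))"
  proof (intro sum.cong refl)
    fix b assume "b \<in> {..<r}"
    hence "(s+b+s) + r \<le> 2*k" using s by auto
    thus "?C b * (\<Sum>a<r. x a * v ((s+b+s)+1+a)) = ?C b * (\<Sum>a<r. ?C a * v ((s+b+s)+a))"
      using half_step[OF fr r, of "s+b+s" x] by simp
  qed
  also have "\<dots> = (\<Sum>a<r. ?C a * (\<Sum>b<r. ?C b * v ((s+b+s)+a)))"
    by (rule dsum_swap)
  also have "\<dots> = Qf v s r ?C"
    unfolding Qf_def sum_distrib_left by (intro sum.cong refl) (simp add: ac_simps)
  finally show ?thesis .
qed

lemma Cs_nonzero:
  assumes r: "1 \<le> r" and f0: "f 0 \<noteq> 0" and nz: "\<exists>i<r. x i \<noteq> 0"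
  shows "\<exists>j<r. Cs f r x j \<noteq> 0"
proof (rule ccontr)
  assume "\<not> ?thesis"
  hence z: "\<And>j. j < r \<Longrightarrow> Cs f r x j = 0" by auto
  have "x (r-1) * f 0 = 0" using z[of 0] r by (simp add: Cs_def)
  hence xr: "x (r-1) = 0" using f0 by simp
  have "x i = 0" if "i < r" for i
  proof (cases "i = r-1")
    case True thus ?thesis using xr by simp
  next
    case False
    hence "i+1 < r" using that by auto
    thus ?thesis using z[of "i+1"] xr by (simp add: Cs_def)
  qed
  thus False using nz by auto
qed

lemma Cs_surj:
  assumes r: "1 \<le> r" and f0: "f 0 \<noteq> 0"
  shows "\<exists>x. \<forall>j<r. Cs f r x j = y j"
proof -
  define x where "x i = (if i = r-1 then y 0 / f 0 else y (i+1) - y 0 / f 0 * f (i+1))" for i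
  have "Cs f r x j = y j" if "j < r" for j
  proof (cases "j = 0")
    case True thus ?thesis using f0 by (simp add: Cs_def x_def)
  next
    case False
    hence "j - 1 \<noteq> r - 1" "j - 1 + 1 = j" using that by auto
    thus ?thesis using False by (simp add: Cs_def x_def)
  qed
  thus ?thesis by blast
qed

lemma PDs_up:
  assumes pd: "PDs v s r" and fr: "frec v r f k" and r: "1 \<le> r" and f0: "f 0 \<noteq> 0" and s: "s + r \<le> k"
  shows "PDs v (s+1) r"
  unfolding PDs_Qf
proof (intro allI impI)
  fix x :: "nat \<Rightarrow> real" assume "\<exists>i<r. x i \<noteq> 0"
  hence "\<exists>j<r. Cs f r x j \<noteq> 0" using Cs_nonzero[of r f x] r f0 by blast
  hence "0 < Qf v s r (Cs f r x)" using pd unfolding PDs_Qf by blast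
  thus "0 < Qf v (s+1) r x" using quad_step[OF fr r s] by simp
qed

lemma Qf_cong: "(\<And>i. i < n \<Longrightarrow> x i = y i) \<Longrightarrow> Qf v s n x = Qf v s n y"
  unfolding Qf_def by (intro sum.cong refl) auto

lemma PDs_down:
  assumes pd: "PDs v (s+1) r" and fr: "frec v r f k" and r: "1 \<le> r" and f0: "f 0 \<noteq> 0" and s: "s + r \<le> k"
  shows "PDs v s r"
  unfolding PDs_Qf
proof (intro allI impI)
  fix y :: "nat \<Rightarrow> real" assume ny: "\<exists>i<r. y i \<noteq> 0"
  obtain x where x: "\<forall>j<r. Cs f r x j = y j" using Cs_surj[of r f y] r f0 by blast
  have nx: "\<exists>i<r. x i \<noteq> 0"
  proof (rule ccontr)
    assume "\<not> ?thesis"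
    hence "\<forall>i<r. x i = 0" by auto
    hence "\<forall>j<r. Cs f r x j = 0" using r by (auto simp: Cs_def)
    thus False using x ny by auto
  qed
  have "0 < Qf v (s+1) r x" using pd nx unfolding PDs_Qf by blast
  also have "Qf v (s+1) r x = Qf v s r (Cs f r x)" using quad_step[OF fr r s] .
  also have "\<dots> = Qf v s r y" using x by (intro Qf_cong) auto
  finally show "0 < Qf v s r y" .
qed

lemma PDs_up_iter:
  assumes pd: "PDs v 0 r" and fr: "frec v r f k" and r: "1 \<le> r" and f0: "f 0 \<noteq> 0"
  shows "s + r \<le> k+1 \<Longrightarrow> PDs v s r"
proof (induction s)
  case 0 thus ?case using pd by simp
next
  case (Suc s) thus ?case using PDs_up[OF _ fr r f0, of s] by simp
qed

lemma PDs_down_iter: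
  assumes fr: "frec v r f k" and r: "1 \<le> r" and f0: "f 0 \<noteq> 0"
  shows "PDs v s r \<Longrightarrow> s + r \<le> k+1 \<Longrightarrow> PDs v 0 r"
proof (induction s)
  case 0 thus ?case by simp
next
  case (Suc s) thus ?case using PDs_down[OF _ fr r f0, of s] by simp
qed

lemma PDs_rev:
  assumes pd: "PDs v (k+1-r) r" and rk: "r \<le> k+1"
  shows "PDs (rev_seq k v) 0 r"
  unfolding PDs_Qf
proof (intro allI impI)
  fix x :: "nat \<Rightarrow> real" assume nz: "\<exists>i<r. x i \<noteq> 0"
  define x' where "x' i = x (r - Suc i)" for i
  have nz': "\<exists>i<r. x' i \<noteq> 0"
  proof -
    obtain i where i: "i<r" "x i \<noteq> 0" using nz by auto
    hence "r - Suc (r - Suc i) = i" by auto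
    thus ?thesis using i by (intro exI[of _ "r - Suc i"]) (auto simp: x'_def)
  qed
  let ?s = "k+1-r"
  have "Qf v ?s r x' = (\<Sum>a<r. \<Sum>b<r. x' a * v (?s + a + ?s + b) * x' b)"
    unfolding Qf_def by simp
  also have "\<dots> = (\<Sum>a<r. \<Sum>b<r. x' (r - Suc a) * v (?s + (r - Suc a) + ?s + b) * x' b)"
    by (rule sum.nat_diff_reindex[symmetric])
  also have "\<dots> = (\<Sum>a<r. \<Sum>b<r. x' (r - Suc a) * v (?s + (r - Suc a) + ?s + (r - Suc b)) * x' (r - Suc b))"
    by (rule sum.cong[OF refl], rule sum.nat_diff_reindex[symmetric])
  also have "\<dots> = Qf (rev_seq k v) 0 r x"
    unfolding Qf_def rev_seq_def x'_def
  proof (intro sum.cong refl)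
    fix a b assume a: "a \<in> {..<r}" and b: "b \<in> {..<r}"
    have e1: "r - Suc (r - Suc a) = a" "r - Suc (r - Suc b) = b" using a b by auto
    have e2: "?s + (r - Suc a) + ?s + (r - Suc b) = 2*k - (0+a+0+b)" using a b rk by auto
    show "x (r - Suc (r - Suc a)) * v (?s + (r - Suc a) + ?s + (r - Suc b)) * x (r - Suc (r - Suc b)) =
          x a * v (2*k - (0+a+0+b)) * x b" by (simp only: e1 e2)
  qed
  finally show "0 < Qf (rev_seq k v) 0 r x" using pd nz' unfolding PDs_Qf by auto
qed


lemma kv_sum_gen:
  fixes g c :: "nat \<Rightarrow> real"
  shows "(\<Sum>b<n. g b * (if b<i then -c b else if b=i then 1 else 0)) =
     (if n \<le> i then -(\<Sum>b<n. c b * g b) else g i - (\<Sum>b<i. c b * g b))"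
proof (induction n)
  case 0 thus ?case by simp
next
  case (Suc n)
  show ?case
  proof (cases "Suc n \<le> i")
    case True thus ?thesis using Suc by (simp add: algebra_simps)
  next
    case False
    show ?thesis
    proof (cases "n = i")
      case True thus ?thesis using Suc by simp
    next
      case False
      thus ?thesis using Suc \<open>\<not> Suc n \<le> i\<close> by simp
    qed
  qed
qed

lemma kv_sum:
  fixes g c :: "nat \<Rightarrow> real"
  assumes "i < n"
  shows "(\<Sum>b<n. g b * (if b<i then -c b else if b=i then 1 else 0)) = g i - (\<Sum>b<i. c b * g b)"
  using assms kv_sum_gen[of g i c n] by simp

lemma hrank_eq:
  assumes pd: "PDs w 0 r" and rk: "r \<le> k" and cs: "col_in_span k w r"
  shows "hrank k w = r"
proof -
  obtain c where c: "\<forall>l\<le>k. w (r+l) = (\<Sum>j<r. c j * w (j+l))" using cs unfolding col_in_span_def by blast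
  define X where "X b = (if b<r then -c b else if b=r then 1 else 0)" for b
  have "det (hankel k w) = 0"
    unfolding hankel_def det_mat_zero_iff
  proof (intro exI[of _ X] conjI)
    show "\<exists>i<k+1. X i \<noteq> 0" using rk by (intro exI[of _ r]) (auto simp: X_def)
    show "\<forall>a<k+1. (\<Sum>b<k+1. w (a+b) * X b) = 0"
    proof (intro allI impI)
      fix a assume a: "a < k+1"
      have "(\<Sum>b<k+1. w (a+b) * X b) = w (a+r) - (\<Sum>b<r. c b * w (a+b))"
        unfolding X_def using rk by (subst kv_sum) auto
      also have "w (a+r) = (\<Sum>b<r. c b * w (a+b))"
        using c a by (simp add: add.commute)
      finally show "(\<Sum>b<k+1. w (a+b) * X b) = 0" by simp
    qed
  qed
  hence "hrank k w = (LEAST i. col_in_span k w i)" unfolding hrank_def by simp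
  also have "\<dots> = r"
  proof (rule Least_equality)
    show "col_in_span k w r" by fact
    fix i assume ci: "col_in_span k w i"
    show "r \<le> i"
    proof (rule ccontr)
      assume "\<not> r \<le> i" hence i: "i < r" by simp
      obtain d where d: "\<forall>l\<le>k. w (i+l) = (\<Sum>j<i. d j * w (j+l))" using ci unfolding col_in_span_def by blast
      define Y where "Y b = (if b<i then -d b else if b=i then 1 else 0)" for b
      show False
      proof (rule kernel_contra[OF pd, of Y])
        show "\<exists>b<r. Y b \<noteq> 0" using i by (intro exI[of _ i]) (auto simp: Y_def)
        show "\<forall>a<r. (\<Sum>b<r. w (0+a+0+b) * Y b) = 0"
        proof (intro allI impI)
          fix a assume a: "a<r"
          have "(\<Sum>b<r. w (0+a+0+b) * Y b) = w (a+i) - (\<Sum>b<i. d b * w (a+b))"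
            unfolding Y_def using i by (subst kv_sum) auto
          also have "w (a+i) = (\<Sum>b<i. d b * w (a+b))"
            using d a rk by (simp add: add.commute)
          finally show "(\<Sum>b<r. w (0+a+0+b) * Y b) = 0" by simp
        qed
      qed
    qed
  qed
  finally show ?thesis .
qed

lemma det_PD_contra:
  assumes det: "det (hankel k v) = 0" and pd: "PDs v 0 n" and n: "k+1 \<le> n"
  shows False
proof -
  have pd': "PDs v 0 (k+1)" using sub_block[OF pd, of 0 "k+1"] n by simp
  obtain x where x: "\<exists>i<k+1. x i \<noteq> 0" "\<forall>a<k+1. (\<Sum>b<k+1. v (a+b) * x b) = 0"
    using det unfolding hankel_def det_mat_zero_iff by blast
  show False using kernel_contra[OF pd', of x] x by simp
qed

lemma phi_solves:
  assumes pd: "PDs v 0 r" and r: "r = hrank k v"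
  shows "\<forall>a<r. (\<Sum>j<r. v (a+j) * phi k v j) = v (r+a)"
proof (intro allI impI)
  fix a assume a: "a < r"
  have pd': "\<forall>x. (\<exists>i<r. x i \<noteq> 0) \<longrightarrow> 0 < (\<Sum>a<r. \<Sum>b<r. x a * v (a+b) * x b)"
    using pd unfolding PDs_def by simp
  have S: "(\<Sum>j<r. v (a+j) * (\<Sum>l<r. the (mat_inverse (mat r r (\<lambda>(i,j). v (i+j)))) $$ (j,l) * v (r+l))) = v (r+a)"
    using pd_solve[where f="\<lambda>a b. v (a+b)" and g="\<lambda>l. v (r+l)", OF pd'] a by simp
  have "phi k v j = (\<Sum>l<r. the (mat_inverse (mat r r (\<lambda>(i,j). v (i+j)))) $$ (j,l) * v (r+l))" if "j<r" for j
    using that r unfolding phi_def hankel_ul_def Let_def by simp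
  hence "(\<Sum>j<r. v (a+j) * phi k v j) =
     (\<Sum>j<r. v (a+j) * (\<Sum>l<r. the (mat_inverse (mat r r (\<lambda>(i,j). v (i+j)))) $$ (j,l) * v (r+l)))"
    by (intro sum.cong refl) auto
  thus "(\<Sum>j<r. v (a+j) * phi k v j) = v (r+a)" using S by simp
qed

lemma psi_solves:
  assumes pd: "PDs v (k+1-r) r" and r: "r = hrank k (rev_seq k v)"
  shows "\<forall>a<r. (\<Sum>j<r. v ((k+1-r)+a+(k+1-r)+j) * psi k v j) = v (2*k + 1 - 2*r + a)"
proof (intro allI impI)
  fix a assume a: "a < r"
  let ?s = "k+1-r"
  have pd': "\<forall>x. (\<exists>i<r. x i \<noteq> 0) \<longrightarrow> 0 < (\<Sum>a<r. \<Sum>b<r. x a * v (?s+a+?s+b) * x b)"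
    using pd unfolding PDs_def by simp
  have S: "(\<Sum>j<r. v (?s+a+?s+j) * (\<Sum>l<r. the (mat_inverse (mat r r (\<lambda>(i,j). v (?s+i+?s+j)))) $$ (j,l) * v (2*k + 1 - 2*r + l))) = v (2*k + 1 - 2*r + a)"
    using pd_solve[where f="\<lambda>a b. v (?s+a+?s+b)" and g="\<lambda>l. v (2*k + 1 - 2*r + l)", OF pd'] a by simp
  have "psi k v j = (\<Sum>l<r. the (mat_inverse (mat r r (\<lambda>(i,j). v (?s+i+?s+j)))) $$ (j,l) * v (2*k + 1 - 2*r + l))" if "j<r" for j
    using that r unfolding psi_def hankel_lr_def Let_def by simp
  hence "(\<Sum>j<r. v (?s+a+?s+j) * psi k v j) =
     (\<Sum>j<r. v (?s+a+?s+j) * (\<Sum>l<r. the (mat_inverse (mat r r (\<lambda>(i,j). v (?s+i+?s+j)))) $$ (j,l) * v (2*k + 1 - 2*r + l)))"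
    by (intro sum.cong refl) auto
  thus "(\<Sum>j<r. v (?s+a+?s+j) * psi k v j) = v (2*k + 1 - 2*r + a)" using S by simp
qed

lemma PDs_unique:
  assumes pd: "PDs v s n"
    and x: "\<forall>a<n. (\<Sum>j<n. v (s+a+s+j) * x j) = g a"
    and y: "\<forall>a<n. (\<Sum>j<n. v (s+a+s+j) * y j) = g a"
  shows "\<forall>j<n. x j = y j"
proof (rule ccontr)
  assume "\<not> ?thesis"
  hence nz: "\<exists>j<n. x j - y j \<noteq> 0" by auto
  have "\<forall>a<n. (\<Sum>j<n. v (s+a+s+j) * (x j - y j)) = 0"
    using x y by (simp add: right_diff_distrib sum_subtractf)
  thus False using kernel_contra[OF pd nz] by blast
qed


lemma frec_to_brec:
  assumes fr: "frec v r f k" and r: "1 \<le> r" and f0: "f 0 \<noteq> 0" and rk: "r \<le> k"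
  shows "brec v r (\<lambda>i. if i+1 < r then - f (i+1) / f 0 else 1 / f 0) k"
  unfolding brec_def
proof (intro allI impI)
  fix m assume m: "m \<le> 2*k - r"
  obtain r0 where r0: "r = Suc r0" using r by (cases r) auto
  have "v (m+r) = (\<Sum>i<r. f i * v (m+r-r+i))" using fr m rk unfolding frec_def by auto
  also have "\<dots> = f 0 * v m + (\<Sum>i<r0. f (Suc i) * v (m+1+i))"
    using r0 by (simp add: sum.lessThan_Suc_shift del: sum.lessThan_Suc)
  finally have e1: "v (m+r) = f 0 * v m + (\<Sum>i<r0. f (Suc i) * v (m+1+i))" .
  have "(\<Sum>i<r. (if i+1 < r then - f (i+1) / f 0 else 1 / f 0) * v (m+1+i))
      = (\<Sum>i<r0. (- f (Suc i) / f 0) * v (m+1+i)) + 1 / f 0 * v (m+r)"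
    using r0 by (simp add: sum.lessThan_Suc)
  also have "(\<Sum>i<r0. (- f (Suc i) / f 0) * v (m+1+i)) = - (\<Sum>i<r0. f (Suc i) * v (m+1+i)) / f 0"
    by (simp add: sum_divide_distrib sum_negf[symmetric])
  finally show "v m = (\<Sum>i<r. (if i+1 < r then - f (i+1) / f 0 else 1 / f 0) * v (m+1+i))"
    using e1 f0 by (simp add: field_simps)
qed

lemma brec_to_frec:
  assumes br: "brec v r g k" and r: "1 \<le> r" and g0: "g (r-1) \<noteq> 0" and rk: "r \<le> k"
  shows "frec v r (\<lambda>i. if i = 0 then 1 / g (r-1) else - g (i-1) / g (r-1)) k"
  unfolding frec_def
proof (intro allI impI)
  fix j assume j: "r \<le> j \<and> j \<le> 2*k"
  obtain r0 where r0: "r = Suc r0" using r by (cases r) auto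
  define m where "m = j - r"
  have jm: "j = m + r" using j m_def by auto
  have "v m = (\<Sum>i<r. g i * v (m+1+i))" using br j unfolding brec_def m_def by auto
  also have "\<dots> = (\<Sum>i<r0. g i * v (m+1+i)) + g r0 * v j"
    using r0 jm by simp
  finally have e1: "v m = (\<Sum>i<r0. g i * v (m+1+i)) + g r0 * v j" .
  have "(\<Sum>i<r. (if i = 0 then 1 / g (r-1) else - g (i-1) / g (r-1)) * v (j-r+i))
     = 1 / g r0 * v m + (\<Sum>i<r0. (- g i / g r0) * v (m+1+i))"
    using r0 by (simp add: sum.lessThan_Suc_shift m_def del: sum.lessThan_Suc)
  also have "(\<Sum>i<r0. (- g i / g r0) * v (m+1+i)) = - (\<Sum>i<r0. g i * v (m+1+i)) / g r0"
    by (simp add: sum_divide_distrib sum_negf[symmetric])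
  also have "1 / g r0 * v m + - (\<Sum>i<r0. g i * v (m+1+i)) / g r0 = v j"
  proof -
    have g0': "g r0 \<noteq> 0" using g0 r0 by simp
    show ?thesis unfolding e1 using g0' by (simp add: field_simps)
  qed
  finally show "v j = (\<Sum>i<r. (if i = 0 then 1 / g (r-1) else - g (i-1) / g (r-1)) * v (j-r+i))"
    by (rule sym)
qed


lemma sing_facts:
  assumes "singular_seq k v"
  shows "hrank k v < k+1" "det (hankel k v) = 0"
  using assms unfolding singular_seq_def hrank_def by (auto split: if_splits)

lemma M:
  assumes prg: "prg k v" and f0: "phi k v 0 \<noteq> 0" and sing: "singular_seq k v"
  shows "hrank k (rev_seq k v) = hrank k v \<and> nrg k v
     \<and> (\<forall>i. i+1 < hrank k v \<longrightarrow> psi k v i = - phi k v (i+1) / phi k v 0)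
     \<and> psi k v (hrank k v - 1) = 1 / phi k v 0"
proof -
  define r where "r = hrank k v"
  have rk1: "r < k+1" using sing_facts[OF sing] r_def by simp
  hence rk: "r \<le> k" by simp
  have pd: "PDs v 0 r" using prg unfolding prg_def r_def Let_def pd_ul by simp
  have fr: "frec v r (phi k v) k" using prg rk1 unfolding prg_def r_def[symmetric] Let_def frec_def by simp
  have r1: "1 \<le> r"
  proof (rule ccontr)
    assume "\<not> 1 \<le> r" hence "r = 0" by simp
    thus False using f0 unfolding phi_def r_def Let_def by simp
  qed
  let ?s = "k+1-r"
  have pdlr: "PDs v ?s r" using PDs_up_iter[OF pd fr r1 f0, of ?s] rk by simp
  define g where "g i = (if i+1 < r then - phi k v (i+1) / phi k v 0 else 1 / phi k v 0)" for i
  have br: "brec v r g k" using frec_to_brec[OF fr r1 f0 rk] unfolding g_def .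
  have pdrev: "PDs (rev_seq k v) 0 r" using PDs_rev[OF pdlr] rk by simp
  have csrev: "col_in_span k (rev_seq k v) r"
    unfolding col_in_span_def
  proof (intro exI[of _ "\<lambda>j. g (r - Suc j)"] allI impI)
    fix l assume l: "l \<le> k"
    define m where "m = 2*k - r - l"
    have "rev_seq k v (r+l) = v m" unfolding rev_seq_def m_def by simp
    also have "\<dots> = (\<Sum>i<r. g i * v (m+1+i))" using br unfolding brec_def m_def by simp
    also have "\<dots> = (\<Sum>i<r. g (r - Suc (r - Suc i)) * v (2*k - (r - Suc i + l)))"
    proof (intro sum.cong refl)
      fix i assume "i \<in> {..<r}"
      hence "r - Suc (r - Suc i) = i" "2*k - (r - Suc i + l) = m+1+i" using rk l by (auto simp: m_def)
      thus "g i * v (m+1+i) = g (r - Suc (r - Suc i)) * v (2*k - (r - Suc i + l))" by simp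
    qed
    also have "\<dots> = (\<Sum>j<r. g (r - Suc j) * v (2*k - (j + l)))"
      by (rule sum.nat_diff_reindex[where g="\<lambda>j. g (r - Suc j) * v (2*k - (j + l))"])
    also have "\<dots> = (\<Sum>j<r. g (r - Suc j) * rev_seq k v (j + l))" unfolding rev_seq_def by simp
    finally show "rev_seq k v (r+l) = (\<Sum>j<r. g (r - Suc j) * rev_seq k v (j + l))" .
  qed
  have hrev: "hrank k (rev_seq k v) = r" using hrank_eq[OF pdrev rk csrev] .
  have psol: "\<forall>a<r. (\<Sum>j<r. v (?s+a+?s+j) * psi k v j) = v (2*k + 1 - 2*r + a)"
    using psi_solves[OF pdlr hrev[symmetric]] .
  have gsol: "\<forall>a<r. (\<Sum>j<r. v (?s+a+?s+j) * g j) = v (2*k + 1 - 2*r + a)"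
  proof (intro allI impI)
    fix a assume a: "a < r"
    define m where "m = 2*k + 1 - 2*r + a"
    have "m \<le> 2*k - r" using a rk by (simp add: m_def)
    hence "v m = (\<Sum>i<r. g i * v (m+1+i))" using br unfolding brec_def by simp
    also have "\<dots> = (\<Sum>j<r. v (?s+a+?s+j) * g j)"
    proof (intro sum.cong refl)
      fix i assume "i \<in> {..<r}"
      have "m+1+i = ?s+a+?s+i" using a rk by (simp add: m_def)
      thus "g i * v (m+1+i) = v (?s+a+?s+i) * g i" by (simp only: mult.commute)
    qed
    finally show "(\<Sum>j<r. v (?s+a+?s+j) * g j) = v (2*k + 1 - 2*r + a)" unfolding m_def by simp
  qed
  have pg: "\<forall>j<r. psi k v j = g j" using PDs_unique[OF pdlr psol gsol] .
  have nrg: "nrg k v"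
    unfolding nrg_def Let_def hrev
  proof (intro conjI impI allI)
    show "pos_def r (hankel_lr k r v)" using pdlr pd_lr by simp
    fix j assume j: "j \<le> 2*k - r"
    define m where "m = 2*k - r - j"
    have "v m = (\<Sum>i<r. g i * v (m+1+i))" using br unfolding brec_def m_def by simp
    also have "\<dots> = (\<Sum>i<r. psi k v i * v (2*k - r + 1 - j + i))"
    proof (intro sum.cong refl)
      fix i assume "i \<in> {..<r}"
      moreover have "m+1+i = 2*k - r + 1 - j + i" using j by (simp add: m_def)
      ultimately show "g i * v (m+1+i) = psi k v i * v (2*k - r + 1 - j + i)" using pg by simp
    qed
    finally show "v (2*k - r - j) = (\<Sum>i<r. psi k v i * v (2*k - r + 1 - j + i))" unfolding m_def .
  qed
  have "\<forall>i. i+1 < r \<longrightarrow> psi k v i = - phi k v (i+1) / phi k v 0"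
    using pg by (auto simp: g_def)
  moreover have "psi k v (r - 1) = 1 / phi k v 0" using pg r1 by (auto simp: g_def)
  ultimately show ?thesis using hrev nrg unfolding r_def by simp
qed


lemma M':
  assumes nrg: "nrg k v" and p0: "psi k v (hrank k (rev_seq k v) - 1) \<noteq> 0" and sing: "singular_seq k v"
  shows "prg k v \<and> phi k v 0 \<noteq> 0"
proof -
  define r where "r = hrank k (rev_seq k v)"
  have det: "det (hankel k v) = 0" using sing_facts[OF sing] by simp
  have pdlr: "PDs v (k+1-r) r" using nrg unfolding nrg_def r_def[symmetric] Let_def pd_lr by simp
  have rk: "r \<le> k"
  proof (rule ccontr)
    assume "\<not> r \<le> k"
    hence "k+1 \<le> r" "k+1-r = 0" by auto
    thus False using det_PD_contra[OF det, of r] pdlr by simp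
  qed
  have r1: "1 \<le> r"
  proof (rule ccontr)
    assume "\<not> 1 \<le> r" hence "r = 0" by simp
    thus False using p0 unfolding psi_def r_def[symmetric] Let_def by simp
  qed
  have br: "brec v r (psi k v) k" using nrg rk unfolding nrg_def r_def[symmetric] Let_def brec_def
  proof (intro allI impI)
    fix m assume m: "m \<le> 2*k - r"
    have "\<forall>j. j \<le> 2*k - r \<longrightarrow> v (2*k - r - j) = (\<Sum>i<r. psi k v i * v (2*k - r + 1 - j + i))"
      using nrg rk unfolding nrg_def r_def[symmetric] Let_def by simp
    note H = this[rule_format, of "2*k - r - m"]
    have e1: "2*k - r - (2*k - r - m) = m" using m by simp
    have e2: "2*k - r + 1 - (2*k - r - m) = m + 1" using m by simp
    have j: "2*k - r - m \<le> 2*k - r" by simp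
    show "v m = (\<Sum>i<r. psi k v i * v (m + 1 + i))" using H[OF j] unfolding e1 e2 .
  qed
  have p0': "psi k v (r-1) \<noteq> 0" using p0 r_def by simp
  define f where "f i = (if i = 0 then 1 / psi k v (r-1) else - psi k v (i-1) / psi k v (r-1))" for i
  have fr: "frec v r f k" using brec_to_frec[OF br r1 p0' rk] unfolding f_def .
  have f0: "f 0 \<noteq> 0" using p0' by (simp add: f_def)
  have pd0: "PDs v 0 r" using PDs_down_iter[OF fr r1 f0 pdlr] rk by simp
  have cs: "col_in_span k v r"
    unfolding col_in_span_def
  proof (intro exI[of _ f] allI impI)
    fix l assume l: "l \<le> k"
    have "v (r+l) = (\<Sum>i<r. f i * v (r+l-r+i))" using fr l rk unfolding frec_def by simp
    thus "v (r+l) = (\<Sum>j<r. f j * v (j+l))" by (simp add: add.commute)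
  qed
  have hr: "hrank k v = r" using hrank_eq[OF pd0 rk cs] .
  have psol: "\<forall>a<r. (\<Sum>j<r. v (a+j) * phi k v j) = v (r+a)" using phi_solves[OF pd0 hr[symmetric]] .
  have fsol: "\<forall>a<r. (\<Sum>j<r. v (0+a+0+j) * f j) = v (r+a)"
  proof (intro allI impI)
    fix a assume a: "a < r"
    have "v (r+a) = (\<Sum>i<r. f i * v (r+a-r+i))" using fr a rk unfolding frec_def by simp
    thus "(\<Sum>j<r. v (0+a+0+j) * f j) = v (r+a)" by (simp add: mult.commute)
  qed
  have pf: "\<forall>j<r. phi k v j = f j" using PDs_unique[OF pd0 _ fsol] psol by simp
  have "prg k v"
    unfolding prg_def Let_def hr
  proof (intro conjI impI allI)
    show "pos_def r (hankel_ul r v)" using pd0 pd_ul by simp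
    fix j assume j: "r \<le> j \<and> j \<le> 2*k"
    have "v j = (\<Sum>i<r. f i * v (j-r+i))" using fr j unfolding frec_def by simp
    also have "\<dots> = (\<Sum>i<r. phi k v i * v (j-r+i))" using pf by (intro sum.cong refl) auto
    finally show "v j = (\<Sum>i<r. phi k v i * v (j-r+i))" .
  qed
  moreover have "phi k v 0 \<noteq> 0" using pf r1 f0 by simp
  ultimately show ?thesis by simp
qed

lemma E:
  assumes prg: "prg k v" and nrg: "nrg k v" and sing: "singular_seq k v" and nz: "\<exists>j\<le>2*k. v j \<noteq> 0"
  shows "phi k v 0 \<noteq> 0"
proof
  assume f0: "phi k v 0 = 0"
  define r where "r = hrank k v"
  have rk1: "r < k+1" using sing_facts[OF sing] r_def by simp
  hence rk: "r \<le> k" by simp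
  have det: "det (hankel k v) = 0" using sing_facts[OF sing] by simp
  have pd: "PDs v 0 r" using prg unfolding prg_def r_def Let_def pd_ul by simp
  have fr: "frec v r (phi k v) k" using prg rk1 unfolding prg_def r_def[symmetric] Let_def frec_def by simp
  have r1: "1 \<le> r"
  proof (rule ccontr)
    assume "\<not> 1 \<le> r" hence "r = 0" by simp
    hence "\<forall>j\<le>2*k. v j = 0" using fr unfolding frec_def by simp
    thus False using nz by auto
  qed
  define r' where "r' = hrank k (rev_seq k v)"
  have pdlr: "PDs v (k+1-r') r'" using nrg unfolding nrg_def r'_def[symmetric] Let_def pd_lr by simp
  have rk': "r' \<le> k"
  proof (rule ccontr)
    assume "\<not> r' \<le> k"
    hence "k+1 \<le> r'" "k+1-r' = 0" by auto
    thus False using det_PD_contra[OF det, of r'] pdlr by simp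
  qed
  have br: "\<forall>m. m \<le> 2*k - r' \<longrightarrow> v m = (\<Sum>i<r'. psi k v i * v (m + 1 + i))"
  proof (intro allI impI)
    fix m assume m: "m \<le> 2*k - r'"
    have "\<forall>j. j \<le> 2*k - r' \<longrightarrow> v (2*k - r' - j) = (\<Sum>i<r'. psi k v i * v (2*k - r' + 1 - j + i))"
      using nrg rk' unfolding nrg_def r'_def[symmetric] Let_def by simp
    note H = this[rule_format, of "2*k - r' - m"]
    have e1: "2*k - r' - (2*k - r' - m) = m" using m by simp
    have e2: "2*k - r' + 1 - (2*k - r' - m) = m + 1" using m by simp
    have j: "2*k - r' - m \<le> 2*k - r'" by simp
    show "v m = (\<Sum>i<r'. psi k v i * v (m + 1 + i))" using H[OF j] unfolding e1 e2 .
  qed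
  show False
  proof (cases "r \<le> r'")
    case True
    let ?s = "k+1-r"
    have pd2: "PDs v ?s r" using sub_block[OF pdlr, of "r'-r" r] True rk' by simp
    obtain r0 where r0: "r = Suc r0" using r1 by (cases r) auto
    define z where "z b = (if b+1 < r then - phi k v (b+1) else 1)" for b
    show False
    proof (rule kernel_contra[OF pd2, of z])
      show "\<exists>b<r. z b \<noteq> 0" using r0 by (intro exI[of _ r0]) (simp add: z_def)
      show "\<forall>a<r. (\<Sum>b<r. v (?s+a+?s+b) * z b) = 0"
      proof (intro allI impI)
        fix a assume a: "a < r"
        define p where "p = ?s+a+?s"
        have p1: "1 \<le> p" using rk by (simp add: p_def)
        have j: "r \<le> p + r0 \<and> p + r0 \<le> 2*k" unfolding p_def using a rk r0 by linarith
        have "v (p+r0) = (\<Sum>i<r. phi k v i * v (p+r0-r+i))"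
          using fr[unfolded frec_def, rule_format, OF j] .
        also have "\<dots> = (\<Sum>i<r0. phi k v (Suc i) * v (p+i))"
          using r0 f0 p1 by (simp add: sum.lessThan_Suc_shift del: sum.lessThan_Suc)
        finally have e: "v (p+r0) = (\<Sum>i<r0. phi k v (Suc i) * v (p+i))" .
        have "(\<Sum>b<r. v (?s+a+?s+b) * z b) = (\<Sum>b<r0. v (p+b) * (- phi k v (Suc b))) + v (p+r0)"
          using r0 by (simp add: z_def p_def)
        also have "\<dots> = 0" using e by (simp add: sum_negf mult.commute)
        finally show "(\<Sum>b<r. v (?s+a+?s+b) * z b) = 0" .
      qed
    qed
  next
    case False
    have pd2: "PDs v 0 (r'+1)" using sub_block[OF pd, of 0 "r'+1"] False by simp
    define y where "y b = (if b = 0 then 1 else - psi k v (b-1))" for b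
    show False
    proof (rule kernel_contra[OF pd2, of y])
      show "\<exists>b<r'+1. y b \<noteq> 0" by (intro exI[of _ 0]) (simp add: y_def)
      show "\<forall>a<r'+1. (\<Sum>b<r'+1. v (0+a+0+b) * y b) = 0"
      proof (intro allI impI)
        fix a assume a: "a < r'+1"
        have "(\<Sum>b<r'+1. v (0+a+0+b) * y b) = v a - (\<Sum>i<r'. psi k v i * v (a+1+i))"
          by (simp add: sum.lessThan_Suc_shift y_def sum_negf mult.commute del: sum.lessThan_Suc)
        also have "v a = (\<Sum>i<r'. psi k v i * v (a+1+i))" using br a rk' by simp
        finally show "(\<Sum>b<r'+1. v (0+a+0+b) * y b) = 0" by simp
      qed
    qed
  qed
qed

theorem proposition2p3:
  fixes k :: nat and v :: "nat \<Rightarrow> real"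
  assumes sing: "singular_seq k v"
    and nonzero: "\<exists>j\<le>2*k. v j \<noteq> 0"
  defines "r' \<equiv> hrank k (rev_seq k v)"
  shows "((prg k v \<and> phi k v 0 \<noteq> 0) \<longleftrightarrow> (nrg k v \<and> psi k v (r' - 1) \<noteq> 0))
       \<and> ((nrg k v \<and> psi k v (r' - 1) \<noteq> 0) \<longleftrightarrow> rg k v)
       \<and> (rg k v \<longleftrightarrow>
           (rg k v \<and> hrank k v = r' \<and> phi k v 0 \<noteq> 0 \<and>
            (\<forall>i. i + 2 \<le> hrank k v \<longrightarrow> psi k v i = - phi k v (i+1) / phi k v 0) \<and>
            psi k v (hrank k v - 1) = 1 / phi k v 0))"
proof -
  have A: "nrg k v \<and> psi k v (r' - 1) \<noteq> 0" if "prg k v" "phi k v 0 \<noteq> 0"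
    using M[OF that sing] that unfolding r'_def by auto
  have B: "prg k v \<and> phi k v 0 \<noteq> 0" if "nrg k v" "psi k v (r' - 1) \<noteq> 0"
    using M'[OF that(1) _ sing] that(2) unfolding r'_def by auto
  have C: "hrank k v = r' \<and> phi k v 0 \<noteq> 0 \<and>
            (\<forall>i. i + 2 \<le> hrank k v \<longrightarrow> psi k v i = - phi k v (i+1) / phi k v 0) \<and>
            psi k v (hrank k v - 1) = 1 / phi k v 0" if "rg k v"
  proof -
    have p: "prg k v" "nrg k v" using that unfolding rg_def by auto
    have f0: "phi k v 0 \<noteq> 0" using E[OF p sing nonzero] .
    have "\<And>i. i + 2 \<le> hrank k v \<Longrightarrow> i + 1 < hrank k v" by simp
    thus ?thesis using M[OF p(1) f0 sing] f0 unfolding r'_def by auto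
  qed
  show ?thesis using A B C unfolding rg_def by blast
qed

end
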